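(* Let $X$ be a $T_1$ topological space. (i) A nonzero ideal $I$ of $C_c(X)_F$ is minimal if and only if $I$ is generated by $\chi_{\{a\}}$ for some $a\in X$. (ii) A nonzero ideal $I$ of $C_c(X)_F$ is minimal if and only if $|Z[I]|=2$. (iii) The socle of $C_c(X)_F$ is the set of all $f\in C_c(X)_F$ such that $X\setminus Z(f)$ is finite. (iv) The socle of $C_c(X)_F$ is an essential ideal and $\bigcap_{f\in \mathrm{Soc}}Z(f)=\emptyset$.
   Context: $C_c(X)_F$ denotes the set of all functions $f:X\to\mathbb{R}$ whose range is countable and whose set of points of discontinuity is finite; it is a commutative ring with unity under pointwise operations. $Z(f)=\{x:f(x)=0\}$, $Z[I]=\{Z(f):f\in I\}$. $\chi_{\{a\}}$ is the function equal to $1$ at $a$ and $0$ elsewhere. The socle $\mathrm{Soc}$ of a commutative ring is the sum of all its minimal ideals. An ideal is essential if it meets every nonzero ideal nontrivially. *)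

theory Defs
  imports "HOL-Analysis.Analysis" "HOL-Algebra.Ideal"
begin

definition CcF :: "('a::topological_space \<Rightarrow> real) set" where
  "CcF = {f. countable (range f) \<and> finite {x. \<not> (f \<longlongrightarrow> f x) (at x)}}"

definition CcF_ring :: "('a::topological_space \<Rightarrow> real) ring" where
  "CcF_ring = \<lparr>carrier = CcF, monoid.mult = (\<lambda>f g x. f x * g x), one = (\<lambda>_. 1),
               zero = (\<lambda>_. 0), add = (\<lambda>f g x. f x + g x)\<rparr>"

definition Zset :: "('a \<Rightarrow> real) \<Rightarrow> 'a set" where
  "Zset f = {x. f x = 0}"

definition minimal_ideal :: "('b, 'c) ring_scheme \<Rightarrow> 'b set \<Rightarrow> bool" where
  "minimal_ideal R I \<longleftrightarrow> ideal I R \<and> I \<noteq> {\<zero>\<^bsub>R\<^esub>} \<and>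
     (\<forall>J. ideal J R \<and> J \<subseteq> I \<and> J \<noteq> {\<zero>\<^bsub>R\<^esub>} \<longrightarrow> J = I)"

definition socle :: "('b, 'c) ring_scheme \<Rightarrow> 'b set" where
  "socle R = Idl\<^bsub>R\<^esub> (\<Union>{I. minimal_ideal R I})"

definition essential_ideal :: "('b, 'c) ring_scheme \<Rightarrow> 'b set \<Rightarrow> bool" where
  "essential_ideal R I \<longleftrightarrow> ideal I R \<and>
     (\<forall>J. ideal J R \<and> J \<noteq> {\<zero>\<^bsub>R\<^esub>} \<longrightarrow> I \<inter> J \<noteq> {\<zero>\<^bsub>R\<^esub>})"

end

theory Submission
  imports Defs
begin

lemma CcF_add: assumes "f \<in> CcF" "g \<in> CcF" shows "(\<lambda>x. f x + g x) \<in> CcF"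
proof -
  have r: "range (\<lambda>x. f x + g x) \<subseteq> (\<lambda>(u,v). u + v) ` (range f \<times> range g)" by auto
  have "countable (range (\<lambda>x. f x + g x))"
    using assms unfolding CcF_def by (intro countable_subset[OF r] countable_image) (auto intro: countable_SIGMA)
  moreover have "{x. \<not> ((\<lambda>x. f x + g x) \<longlongrightarrow> f x + g x) (at x)} \<subseteq>
      {x. \<not> (f \<longlongrightarrow> f x) (at x)} \<union> {x. \<not> (g \<longlongrightarrow> g x) (at x)}"
    using tendsto_add by blast
  ultimately show ?thesis using assms unfolding CcF_def by (auto intro: finite_subset)
qed

lemma CcF_mult: assumes "f \<in> CcF" "g \<in> CcF" shows "(\<lambda>x. f x * g x) \<in> CcF"
proof -
  have r: "range (\<lambda>x. f x * g x) \<subseteq> (\<lambda>(u,v). u * v) ` (range f \<times> range g)" by auto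
  have "countable (range (\<lambda>x. f x * g x))"
    using assms unfolding CcF_def by (intro countable_subset[OF r] countable_image) (auto intro: countable_SIGMA)
  moreover have "{x. \<not> ((\<lambda>x. f x * g x) \<longlongrightarrow> f x * g x) (at x)} \<subseteq>
      {x. \<not> (f \<longlongrightarrow> f x) (at x)} \<union> {x. \<not> (g \<longlongrightarrow> g x) (at x)}"
    using tendsto_mult by blast
  ultimately show ?thesis using assms unfolding CcF_def by (auto intro: finite_subset)
qed

lemma CcF_uminus: assumes "f \<in> CcF" shows "(\<lambda>x. - f x) \<in> CcF"
proof -
  have "countable (range (\<lambda>x. - f x))"
  proof -
    have "range (\<lambda>x. - f x) = uminus ` range f" by auto
    thus ?thesis using assms unfolding CcF_def by auto
  qed
  moreover have "{x. \<not> ((\<lambda>x. - f x) \<longlongrightarrow> - f x) (at x)} \<subseteq> {x. \<not> (f \<longlongrightarrow> f x) (at x)}"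
    using tendsto_minus by blast
  ultimately show ?thesis using assms unfolding CcF_def by (auto intro: finite_subset)
qed

lemma CcF_const: "(\<lambda>_. c) \<in> CcF"
  unfolding CcF_def by auto

lemma CcF_fs: fixes f :: "'a::t1_space \<Rightarrow> real"
  assumes "finite {x. f x \<noteq> 0}" shows "f \<in> CcF"
proof -
  let ?T = "{x. f x \<noteq> 0}"
  have "range f \<subseteq> insert 0 (f ` ?T)" by auto
  hence "countable (range f)" using assms
    by (meson countable_finite finite_imageI finite_insert finite_subset)
  moreover have "{x. \<not> (f \<longlongrightarrow> f x) (at x)} \<subseteq> ?T"
  proof
    fix x assume x: "x \<in> {x. \<not> (f \<longlongrightarrow> f x) (at x)}"
    show "x \<in> ?T"
    proof (rule ccontr)
      assume "x \<notin> ?T"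
      hence fx: "f x = 0" by simp
      have "open (- ?T)" using finite_imp_closed[OF assms] by (simp add: closed_def)
      hence "eventually (\<lambda>y. f y = 0) (at x)"
        unfolding eventually_at_topological using \<open>x \<notin> ?T\<close> by (intro exI[of _ "- ?T"]) auto
      hence "(f \<longlongrightarrow> f x) (at x)" using fx by (simp add: tendsto_eventually)
      with x show False by simp
    qed
  qed
  ultimately show ?thesis using assms unfolding CcF_def by (auto intro: finite_subset)
qed

lemma CcF_carrier[simp]: "carrier CcF_ring = CcF"
  and CcF_mult_eq[simp]: "f \<otimes>\<^bsub>CcF_ring\<^esub> g = (\<lambda>x. f x * g x)"
  and CcF_add_eq[simp]: "f \<oplus>\<^bsub>CcF_ring\<^esub> g = (\<lambda>x. f x + g x)"
  and CcF_zero[simp]: "\<zero>\<^bsub>CcF_ring\<^esub> = (\<lambda>_. 0)"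
  and CcF_one[simp]: "\<one>\<^bsub>CcF_ring\<^esub> = (\<lambda>_. 1)"
  by (simp_all add: CcF_ring_def)

lemma CcF_cring: "cring (CcF_ring :: ('a::topological_space \<Rightarrow> real) ring)"
proof (rule cringI)
  show "abelian_group (CcF_ring :: ('a \<Rightarrow> real) ring)"
  proof (rule abelian_groupI, simp_all add: CcF_add CcF_const)
    fix x :: "'a \<Rightarrow> real" assume "x \<in> CcF"
    thus "\<exists>y\<in>CcF. (\<lambda>xa. y xa + x xa) = (\<lambda>_. 0)"
      by (intro bexI[of _ "\<lambda>t. - x t"]) (auto simp: CcF_uminus)
  qed (auto simp: algebra_simps)
  show "comm_monoid (CcF_ring :: ('a \<Rightarrow> real) ring)"
    by (rule comm_monoidI) (auto simp: CcF_mult CcF_const algebra_simps)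
qed (auto simp: algebra_simps)

lemma chi_CcF: "(indicator {a} :: 'a::t1_space \<Rightarrow> real) \<in> CcF"
  by (rule CcF_fs) (auto simp: indicator_def)

lemma scal_CcF: "(\<lambda>x. c * (indicator {a} x :: real)) \<in> (CcF :: ('a::t1_space \<Rightarrow> real) set)"
  by (rule CcF_fs, rule finite_subset[of _ "{a}"]) (auto simp: indicator_def)

lemma K:
  fixes I :: "('a::t1_space \<Rightarrow> real) set"
  assumes "ideal I CcF_ring" "f \<in> I" "f a \<noteq> 0"
  shows "indicator {a} \<in> I"
proof -
  have "(\<lambda>x. inverse (f a) * indicator {a} x) \<otimes>\<^bsub>CcF_ring\<^esub> f \<in> I"
    by (rule ideal.I_l_closed[OF assms(1) assms(2)]) (simp add: scal_CcF)
  moreover have "(\<lambda>x. inverse (f a) * indicator {a} x) \<otimes>\<^bsub>CcF_ring\<^esub> f = indicator {a}"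
    using assms(3) by (auto simp: indicator_def)
  ultimately show ?thesis by simp
qed

definition L :: "'a \<Rightarrow> ('a \<Rightarrow> real) set" where
  "L a = range (\<lambda>c x. c * indicator {a} x)"

lemma L_sub:
  fixes I :: "('a::t1_space \<Rightarrow> real) set"
  assumes "ideal I CcF_ring" "indicator {a} \<in> I"
  shows "L a \<subseteq> I"
proof
  fix g assume "g \<in> L a"
  then obtain c where g: "g = (\<lambda>x. c * indicator {a} x)" by (auto simp: L_def)
  have "(\<lambda>_. c) \<otimes>\<^bsub>CcF_ring\<^esub> indicator {a} \<in> I"
    by (rule ideal.I_l_closed[OF assms]) (simp add: CcF_const)
  thus "g \<in> I" using g by simp
qed

lemma Idl_chi:
  "Idl\<^bsub>(CcF_ring :: ('a::t1_space \<Rightarrow> real) ring)\<^esub> {indicator {a}} = L a"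
proof -
  interpret cring "CcF_ring :: ('a \<Rightarrow> real) ring" by (rule CcF_cring)
  let ?R = "CcF_ring :: ('a \<Rightarrow> real) ring"
  have "Idl\<^bsub>?R\<^esub> {indicator {a}} = PIdl\<^bsub>?R\<^esub> (indicator {a})"
    by (rule sym, rule cgenideal_eq_genideal) (simp add: chi_CcF)
  also have "\<dots> = L a"
  proof
    show "PIdl\<^bsub>?R\<^esub> (indicator {a}) \<subseteq> L a"
    proof
      fix g assume "g \<in> PIdl\<^bsub>?R\<^esub> (indicator {a})"
      then obtain h where "g = (\<lambda>x. h x * indicator {a} x)" by (auto simp: cgenideal_def)
      hence "g = (\<lambda>x. h a * indicator {a} x)" by (auto simp: indicator_def)
      thus "g \<in> L a" by (auto simp: L_def)
    qed
    show "L a \<subseteq> PIdl\<^bsub>?R\<^esub> (indicator {a})"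
      by (rule L_sub[OF cgenideal_ideal cgenideal_self]) (auto simp: chi_CcF)
  qed
  finally show ?thesis .
qed

lemma L_ideal: "ideal (L a) (CcF_ring :: ('a::t1_space \<Rightarrow> real) ring)"
proof -
  interpret cring "CcF_ring :: ('a \<Rightarrow> real) ring" by (rule CcF_cring)
  have "ideal (Idl\<^bsub>(CcF_ring :: ('a \<Rightarrow> real) ring)\<^esub> {indicator {a}}) CcF_ring"
    by (rule genideal_ideal) (simp add: chi_CcF)
  thus ?thesis by (simp add: Idl_chi)
qed

lemma chi_ne0: "indicator {a} \<noteq> (\<lambda>_. 0::real)"
  by (metis indicator_simps(1) insertI1 zero_neq_one)

lemma chi_L: "indicator {a} \<in> L a"
  unfolding L_def by (rule range_eqI[of _ _ 1]) simp

lemma L_min: "minimal_ideal (CcF_ring :: ('a::t1_space \<Rightarrow> real) ring) (L a)"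
  unfolding minimal_ideal_def
proof (intro conjI allI impI)
  show "ideal (L a) CcF_ring" by (rule L_ideal)
  show "L a \<noteq> {\<zero>\<^bsub>CcF_ring\<^esub>}" using chi_L[of a] chi_ne0[of a] by auto
  fix J :: "('a \<Rightarrow> real) set"
  assume J: "ideal J CcF_ring \<and> J \<subseteq> L a \<and> J \<noteq> {\<zero>\<^bsub>CcF_ring\<^esub>}"
  have "\<zero>\<^bsub>CcF_ring\<^esub> \<in> J" using J additive_subgroup.zero_closed ideal.axioms(1) by blast
  then obtain g where g: "g \<in> J" "g \<noteq> (\<lambda>_. 0)" using J by auto
  then obtain c where c: "g = (\<lambda>x. c * indicator {a} x)" using J by (auto simp: L_def)
  have "g a \<noteq> 0" using g(2) c by auto
  hence "indicator {a} \<in> J" using K J g(1) by blast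
  hence "L a \<subseteq> J" using L_sub J by blast
  thus "J = L a" using J by blast
qed

lemma nonzero_elem:
  fixes I :: "('a::topological_space \<Rightarrow> real) set"
  assumes "ideal I CcF_ring" "I \<noteq> {\<zero>\<^bsub>CcF_ring\<^esub>}"
  obtains f a where "f \<in> I" "f a \<noteq> 0"
proof -
  have "\<zero>\<^bsub>CcF_ring\<^esub> \<in> I" using assms additive_subgroup.zero_closed ideal.axioms(1) by blast
  then obtain g where g: "g \<in> I" "g \<noteq> (\<lambda>_. 0)" using assms by auto
  then obtain a where "g a \<noteq> 0" by auto
  thus ?thesis using g that by blast
qed

lemma min_char:
  fixes I :: "('a::t1_space \<Rightarrow> real) set"
  assumes "ideal I CcF_ring" "I \<noteq> {\<zero>\<^bsub>CcF_ring\<^esub>}"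
  shows "minimal_ideal CcF_ring I \<longleftrightarrow> (\<exists>a. I = L a)"
proof
  assume m: "minimal_ideal CcF_ring I"
  obtain f a where f: "f \<in> I" "f a \<noteq> 0" using nonzero_elem[OF assms] by blast
  hence "L a \<subseteq> I" using K L_sub assms(1) by blast
  moreover have "L a \<noteq> {\<zero>\<^bsub>CcF_ring\<^esub>}" using chi_L[of a] chi_ne0[of a] by auto
  ultimately have "L a = I" using m L_ideal unfolding minimal_ideal_def by blast
  thus "\<exists>a. I = L a" by blast
qed (use L_min in blast)

lemma Zset_L: "Zset ` L a = {UNIV, - {a}}"
proof -
  have "Zset (\<lambda>x. c * indicator {a} x) = (if c = 0 then UNIV else - {a})" for c :: real
    by (auto simp: Zset_def indicator_def)
  hence "Zset ` L a = (\<lambda>c::real. if c = 0 then UNIV else - {a}) ` UNIV"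
    unfolding L_def by (simp add: image_image)
  also have "\<dots> = {UNIV, - {a}}"
    by (auto simp: image_def intro: exI[of _ "0::real"] exI[of _ "1::real"])
  finally show ?thesis .
qed

lemma card_L: "card (Zset ` L a) = 2"
proof -
  have "(UNIV :: 'a set) \<noteq> - {a}" by auto
  thus ?thesis by (simp add: Zset_L)
qed

lemma card_char:
  fixes I :: "('a::t1_space \<Rightarrow> real) set"
  assumes "ideal I CcF_ring" "I \<noteq> {\<zero>\<^bsub>CcF_ring\<^esub>}"
  shows "card (Zset ` I) = 2 \<longleftrightarrow> (\<exists>a. I = L a)"
proof
  assume c2: "card (Zset ` I) = 2"
  hence fin: "finite (Zset ` I)" by (metis card.infinite zero_neq_numeral)
  obtain f a where f: "f \<in> I" "f a \<noteq> 0" using nonzero_elem[OF assms] by blast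
  have chia: "indicator {a} \<in> I" using K assms(1) f by blast
  have z: "(\<lambda>_. 0::real) \<in> I" using assms additive_subgroup.zero_closed ideal.axioms(1) by fastforce
  have sub: "I \<subseteq> L a"
  proof
    fix g assume g: "g \<in> I"
    have "\<forall>b. b \<noteq> a \<longrightarrow> g b = 0"
    proof (intro allI impI, rule ccontr)
      fix b assume b: "b \<noteq> a" "g b \<noteq> 0"
      have chib: "indicator {b} \<in> I" using K assms(1) g b by blast
      have za: "Zset (indicator {a} :: 'a \<Rightarrow> real) = - {a}" for a
        by (auto simp: Zset_def indicator_def)
      have "Zset (\<lambda>_. 0::real) = UNIV" by (simp add: Zset_def)
      hence "{UNIV, - {a}, - {b}} \<subseteq> Zset ` I"
        using z chia chib za by (metis empty_subsetI image_eqI insert_subset)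
      hence "card {UNIV, - {a}, - {b}} \<le> 2" using card_mono[OF fin] c2 by metis
      moreover have "card {UNIV, - {a}, - {b :: 'a}} = 3"
      proof -
        have "UNIV \<noteq> - {a}" "UNIV \<noteq> - {b}" "- {a} \<noteq> - {b}" using b(1) by auto
        thus ?thesis by simp
      qed
      ultimately show False by simp
    qed
    hence "g = (\<lambda>x. g a * indicator {a} x)" by (auto simp: indicator_def)
    thus "g \<in> L a" unfolding L_def by (rule range_eqI)
  qed
  show "\<exists>a. I = L a" using sub L_sub[OF assms(1) chia] by blast
qed (use card_L in auto)

definition FS :: "('a::topological_space \<Rightarrow> real) set" where
  "FS = {f \<in> CcF. finite (UNIV - Zset f)}"

lemma FS_alt: "(f :: 'a::t1_space \<Rightarrow> real) \<in> FS \<longleftrightarrow> finite {x. f x \<noteq> 0}"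
proof -
  have "UNIV - Zset f = {x. f x \<noteq> 0}" by (auto simp: Zset_def)
  thus ?thesis using CcF_fs[of f] by (auto simp: FS_def)
qed

lemma a_inv_CcF:
  assumes "f \<in> CcF"
  shows "a_inv (CcF_ring :: ('a::topological_space \<Rightarrow> real) ring) f = (\<lambda>x. - f x)"
proof -
  interpret cring "CcF_ring :: ('a \<Rightarrow> real) ring" by (rule CcF_cring)
  show ?thesis by (rule minus_equality) (auto simp: assms CcF_uminus)
qed

lemma FS_ideal: "ideal (FS :: ('a::t1_space \<Rightarrow> real) set) CcF_ring"
proof -
  interpret cring "CcF_ring :: ('a \<Rightarrow> real) ring" by (rule CcF_cring)
  show ?thesis
  proof (rule idealI)
    show "ring (CcF_ring :: ('a \<Rightarrow> real) ring)" by (rule ring_axioms)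
    show "subgroup FS (add_monoid (CcF_ring :: ('a \<Rightarrow> real) ring))"
    proof (rule subgroup.intro)
      show "FS \<subseteq> carrier (add_monoid (CcF_ring :: ('a \<Rightarrow> real) ring))"
        by (auto simp: FS_def)
      fix x y :: "'a \<Rightarrow> real"
      assume x: "x \<in> FS"
      have "finite ({t. x t \<noteq> 0})" using x FS_alt by blast
      have xc: "x \<in> CcF" using x by (simp add: FS_def)
      have "(\<lambda>t. - x t) \<in> FS" using x by (simp add: FS_alt)
      thus "inv\<^bsub>add_monoid CcF_ring\<^esub> x \<in> FS" using a_inv_CcF[OF xc] by (simp add: a_inv_def)
      assume y: "y \<in> FS"
      have "{t. x t + y t \<noteq> 0} \<subseteq> {t. x t \<noteq> 0} \<union> {t. y t \<noteq> 0}" by auto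
      thus "x \<otimes>\<^bsub>add_monoid CcF_ring\<^esub> y \<in> FS"
        using x y by (auto simp: FS_alt intro: finite_subset)
    next
      show "\<one>\<^bsub>add_monoid CcF_ring\<^esub> \<in> (FS :: ('a \<Rightarrow> real) set)" by (simp add: FS_alt)
    qed
  next
    fix a x :: "'a \<Rightarrow> real" assume "a \<in> FS" "x \<in> carrier CcF_ring"
    moreover have "{t. x t * a t \<noteq> 0} \<subseteq> {t. a t \<noteq> 0}" "{t. a t * x t \<noteq> 0} \<subseteq> {t. a t \<noteq> 0}" by auto
    ultimately show "x \<otimes>\<^bsub>CcF_ring\<^esub> a \<in> FS" "a \<otimes>\<^bsub>CcF_ring\<^esub> x \<in> FS"
      by (auto simp: FS_alt intro: finite_subset)
  qed
qed

lemma fs_in: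
  fixes J :: "('a::t1_space \<Rightarrow> real) set"
  assumes J: "ideal J CcF_ring" "\<And>b. indicator {b} \<in> J" and T: "finite T"
  shows "{x. f x \<noteq> 0} \<subseteq> T \<Longrightarrow> f \<in> J"
  using T
proof (induction T arbitrary: f rule: finite_induct)
  case empty
  hence "f = (\<lambda>_. 0)" by auto
  thus ?case using J additive_subgroup.zero_closed ideal.axioms(1) by fastforce
next
  case (insert a T)
  define g where "g = (\<lambda>x. if x = a then 0 else f x)"
  have gJ: "g \<in> J" using insert by (intro insert.IH) (auto simp: g_def)
  have hJ: "(\<lambda>x. f a * indicator {a} x) \<in> J" using L_sub[OF J(1) J(2)] by (auto simp: L_def)
  have "(\<lambda>x. f a * indicator {a} x) \<oplus>\<^bsub>CcF_ring\<^esub> g \<in> J"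
    by (rule additive_subgroup.a_closed[OF ideal.axioms(1)[OF J(1)] hJ gJ])
  moreover have "(\<lambda>x. f a * indicator {a} x) \<oplus>\<^bsub>CcF_ring\<^esub> g = f"
    by (auto simp: g_def indicator_def)
  ultimately show ?case by simp
qed

lemma socle_eq: "socle (CcF_ring :: ('a::t1_space \<Rightarrow> real) ring) = FS"
proof -
  interpret cring "CcF_ring :: ('a \<Rightarrow> real) ring" by (rule CcF_cring)
  have U: "\<Union>{I. minimal_ideal (CcF_ring :: ('a \<Rightarrow> real) ring) I} = (\<Union>a. L a)"
  proof -
    have "{I. minimal_ideal (CcF_ring :: ('a \<Rightarrow> real) ring) I} = range L"
    proof
      show "{I. minimal_ideal (CcF_ring :: ('a \<Rightarrow> real) ring) I} \<subseteq> range L"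
      proof
      fix I assume "I \<in> {I. minimal_ideal (CcF_ring :: ('a \<Rightarrow> real) ring) I}"
      hence "minimal_ideal (CcF_ring :: ('a \<Rightarrow> real) ring) I" by simp
      moreover hence "ideal I CcF_ring" "I \<noteq> {\<zero>\<^bsub>CcF_ring\<^esub>}" unfolding minimal_ideal_def by auto
      ultimately show "I \<in> range L" using min_char by blast
      qed
    qed (auto simp: L_min)
    thus ?thesis by simp
  qed
  have sub: "(\<Union>a. L a) \<subseteq> (FS :: ('a \<Rightarrow> real) set)"
  proof
    fix f :: "'a \<Rightarrow> real" assume "f \<in> (\<Union>a. L a)"
    then obtain a c where "f = (\<lambda>x. c * indicator {a} x)" by (auto simp: L_def)
    hence "{x. f x \<noteq> 0} \<subseteq> {a}" by (auto simp: indicator_def)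
    thus "f \<in> FS" by (simp add: FS_alt finite_subset)
  qed
  have carr: "(\<Union>a. L a) \<subseteq> carrier (CcF_ring :: ('a \<Rightarrow> real) ring)"
    using sub by (auto simp: FS_def)
  have eq: "socle (CcF_ring :: ('a \<Rightarrow> real) ring) = Idl\<^bsub>CcF_ring\<^esub> (\<Union>a. L a)"
    unfolding socle_def U ..
  have JI: "ideal (Idl\<^bsub>CcF_ring\<^esub> (\<Union>a. L a)) (CcF_ring :: ('a \<Rightarrow> real) ring)"
    by (rule genideal_ideal[OF carr])
  have chiJ: "indicator {b} \<in> Idl\<^bsub>(CcF_ring :: ('a \<Rightarrow> real) ring)\<^esub> (\<Union>a. L a)" for b
  proof -
    have "indicator {b} \<in> (\<Union>a. L a :: ('a \<Rightarrow> real) set)" using chi_L[of b] by (rule UN_I[rotated]) simp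
    thus ?thesis by (rule subsetD[OF genideal_self[OF carr]])
  qed
  show ?thesis
  proof
    show "socle (CcF_ring :: ('a \<Rightarrow> real) ring) \<subseteq> FS"
      unfolding eq by (rule genideal_minimal[OF FS_ideal sub])
    show "FS \<subseteq> socle (CcF_ring :: ('a \<Rightarrow> real) ring)"
    proof
      fix f :: "'a \<Rightarrow> real" assume f: "f \<in> FS"
      have "f \<in> Idl\<^bsub>(CcF_ring :: ('a \<Rightarrow> real) ring)\<^esub> (\<Union>a. L a)"
        by (rule fs_in[OF JI chiJ, of "{x. f x \<noteq> 0}"]) (use f FS_alt in auto)
      thus "f \<in> socle (CcF_ring :: ('a \<Rightarrow> real) ring)" unfolding eq .
    qed
  qed
qed

theorem proposition3p16:
  fixes R :: "('a::t1_space \<Rightarrow> real) ring"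
  defines "R \<equiv> CcF_ring"
  shows "(\<forall>I. ideal I R \<and> I \<noteq> {\<zero>\<^bsub>R\<^esub>} \<longrightarrow>
            (minimal_ideal R I \<longleftrightarrow> (\<exists>a. I = Idl\<^bsub>R\<^esub> {indicator {a}})))
       \<and> (\<forall>I. ideal I R \<and> I \<noteq> {\<zero>\<^bsub>R\<^esub>} \<longrightarrow>
            (minimal_ideal R I \<longleftrightarrow> card (Zset ` I) = 2))
       \<and> socle R = {f \<in> CcF. finite (UNIV - Zset f)}
       \<and> essential_ideal R (socle R)
       \<and> (\<Inter>f\<in>socle R. Zset f) = {}"
proof (intro conjI allI impI)
  fix I assume I: "ideal I R \<and> I \<noteq> {\<zero>\<^bsub>R\<^esub>}"
  show "minimal_ideal R I \<longleftrightarrow> (\<exists>a. I = Idl\<^bsub>R\<^esub> {indicator {a}})"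
    using min_char I unfolding R_def Idl_chi by blast
  show "minimal_ideal R I \<longleftrightarrow> card (Zset ` I) = 2"
    using min_char card_char I unfolding R_def by blast
next
  show "socle R = {f \<in> CcF. finite (UNIV - Zset f)}"
    unfolding R_def socle_eq FS_def ..
next
  show "essential_ideal R (socle R)"
    unfolding essential_ideal_def R_def socle_eq
  proof (intro conjI allI impI FS_ideal)
    fix J :: "('a \<Rightarrow> real) set" assume J: "ideal J CcF_ring \<and> J \<noteq> {\<zero>\<^bsub>CcF_ring\<^esub>}"
    then obtain f a where "f \<in> J" "f a \<noteq> 0" using nonzero_elem by blast
    hence "indicator {a} \<in> J" using K J by blast
    moreover have "indicator {a} \<in> (FS :: ('a \<Rightarrow> real) set)"
      by (simp add: FS_alt finite_subset[of _ "{a}"] indicator_def)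
    ultimately show "FS \<inter> J \<noteq> {\<zero>\<^bsub>CcF_ring\<^esub>}" using chi_ne0[of a] by auto
  qed
next
  show "(\<Inter>f\<in>socle R. Zset f) = {}"
  proof -
    have "x \<notin> (\<Inter>f\<in>socle R. Zset f)" for x
    proof -
      have "indicator {x} \<in> (FS :: ('a \<Rightarrow> real) set)"
        by (simp add: FS_alt finite_subset[of _ "{x}"] indicator_def)
      moreover have "x \<notin> Zset (indicator {x} :: 'a \<Rightarrow> real)" by (simp add: Zset_def)
      ultimately show ?thesis unfolding R_def socle_eq by blast
    qed
    thus ?thesis by blast
  qed
qed

end
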